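(* Let $q$ be an odd prime power, $g\ge1$, $X,T$ positive integers, and let $\mathcal{Y}$ be the hyperelliptic curve over $\mathbb{F}_q$ with affine equation $y^2=f(x)$, $f(x)=x^{2g+1}+a_{2g}x^{2g}+\dots+a_0\in\mathbb{F}_q[x]$, of genus $g$. Let $J^{\mathcal{Y}}_{\max}$ be the largest integer $J$ for which there exist pairwise distinct $\lambda_1,\dots,\lambda_J\in\mathbb{F}_q$ with $f(\lambda_j)\ne0$ such that, with $h=\prod_{j=1}^J(x-\lambda_j)$, $\mathcal{Y}$ has at least $2J+X+T+6g+2$ affine $\mathbb{F}_q$-rational points $P$ with $y(P)\ne0$, $h(P)\ne0$. Then $$J^{\mathcal{Y}}_{\max}\le\left\lfloor\frac{2q-(X+T+6g+2)}{4}\right\rfloor,$$ and in particular $$\mathcal{R}^{\mathcal{Y}}_{\max}:=\frac{2J^{\mathcal{Y}}_{\max}-g}{2J^{\mathcal{Y}}_{\max}+X+T+5g+2}\le\frac{2q-(X+T+8g+2)}{2q+X+T+4g+2}.$$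
   Context: $\mathcal{R}^{\mathcal{Y}}_{\max}$ is the maximal rate $L/N$ (with $L=2J-g$, $N=L+X+T+6g+2$) of the known $X$-secure $T$-private PIR construction from hyperelliptic curves. *)

theory Defs
  imports Complex_Main "HOL-Computational_Algebra.Polynomial_Factorial" "HOL-Computational_Algebra.Squarefree"
begin

definition good_points :: "'a::{finite,field} poly \<Rightarrow> 'a poly \<Rightarrow> ('a \<times> 'a) set" where
  "good_points f h = {(a, b). b ^ 2 = poly f a \<and> b \<noteq> 0 \<and> poly h a \<noteq> 0}"

definition admissible_J :: "'a::{finite,field} poly \<Rightarrow> nat \<Rightarrow> nat \<Rightarrow> nat \<Rightarrow> nat \<Rightarrow> bool" where
  "admissible_J f g X T J \<longleftrightarrow>
     (\<exists>lam :: nat \<Rightarrow> 'a. inj_on lam {..<J} \<and> (\<forall>j<J. poly f (lam j) \<noteq> 0) \<and>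
        card (good_points f (\<Prod>j<J. [:- lam j, 1:])) \<ge> 2 * J + X + T + 6 * g + 2)"

definition J_max :: "'a::{finite,field} poly \<Rightarrow> nat \<Rightarrow> nat \<Rightarrow> nat \<Rightarrow> nat" where
  "J_max f g X T = Max {J. admissible_J f g X T J}"

definition R_max :: "'a::{finite,field} poly \<Rightarrow> nat \<Rightarrow> nat \<Rightarrow> nat \<Rightarrow> real" where
  "R_max f g X T = (2 * real (J_max f g X T) - real g) /
                   (2 * real (J_max f g X T) + real X + real T + 5 * real g + 2)"

end

theory Submission
  imports Defs
begin

lemma sq_card_le2:
  fixes c :: "'a::{finite,field}"
  shows "card {b. b ^ 2 = c} \<le> 2"
proof (cases "\<exists>b0. b0 ^ 2 = c")
  case True
  then obtain b0 where b0: "b0 ^ 2 = c" by blast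
  have "{b. b ^ 2 = c} \<subseteq> {b0, -b0}"
  proof
    fix b assume "b \<in> {b. b ^ 2 = c}"
    then have "b ^ 2 = b0 ^ 2" using b0 by simp
    then have "(b - b0) * (b + b0) = 0" by (simp add: algebra_simps power2_eq_square)
    then show "b \<in> {b0, -b0}" by (auto simp: eq_neg_iff_add_eq_0)
  qed
  then have "card {b. b ^ 2 = c} \<le> card {b0, -b0}" by (intro card_mono) auto
  also have "\<dots> \<le> 2" by (simp add: card_insert_if)
  finally show ?thesis .
next
  case False
  then show ?thesis by simp
qed

lemma admissible_bound:
  fixes f :: "'a::{finite,field} poly"
  assumes "card (UNIV :: 'a set) = q" and "admissible_J f g X T J"
  shows "4 * J + (X + T + 6 * g + 2) \<le> 2 * q"
proof -
  obtain lam :: "nat \<Rightarrow> 'a" where inj: "inj_on lam {..<J}"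
    and c: "card (good_points f (\<Prod>j<J. [:- lam j, 1:])) \<ge> 2 * J + X + T + 6 * g + 2"
    using assms(2) unfolding admissible_J_def by blast
  define A where "A = UNIV - lam ` {..<J}"
  have cardA: "card A = q - J"
    unfolding A_def using assms(1) inj
    by (simp add: card_Diff_subset card_image)
  have Jq: "J \<le> q"
    using assms(1) inj card_image[OF inj] card_mono[of "UNIV :: 'a set" "lam ` {..<J}"] by simp
  have sub: "good_points f (\<Prod>j<J. [:- lam j, 1:]) \<subseteq> Sigma A (\<lambda>a. {b. b ^ 2 = poly f a})"
    unfolding good_points_def A_def by (auto simp: poly_prod)
  have "card (good_points f (\<Prod>j<J. [:- lam j, 1:])) \<le> card (Sigma A (\<lambda>a. {b. b ^ 2 = poly f a}))"
    by (intro card_mono sub) simp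
  also have "\<dots> = (\<Sum>a\<in>A. card {b. b ^ 2 = poly f a})"
    by (simp add: card_SigmaI)
  also have "\<dots> \<le> (\<Sum>a\<in>A. 2)" by (intro sum_mono sq_card_le2)
  also have "\<dots> = 2 * (q - J)" using cardA by simp
  finally show ?thesis using c Jq by linarith
qed

theorem corollary4p5:
  fixes f :: "'a::{finite,field} poly" and q g X T :: nat
  assumes "card (UNIV :: 'a set) = q" and "odd q"
    and "g \<ge> 1" and "X \<ge> 1" and "T \<ge> 1"
    and "lead_coeff f = 1" and "degree f = 2 * g + 1" and "squarefree f"
  shows "{J. admissible_J f g X T J} \<noteq> {} \<longrightarrow>
      int (J_max f g X T) \<le> \<lfloor>(2 * real q - (real X + real T + 6 * real g + 2)) / 4\<rfloor> \<and>
      R_max f g X T \<le> (2 * real q - (real X + real T + 8 * real g + 2)) /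
                       (2 * real q + real X + real T + 4 * real g + 2)"
proof
  assume ne: "{J. admissible_J f g X T J} \<noteq> {}"
  have fin: "finite {J. admissible_J f g X T J}"
    by (rule finite_subset[of _ "{..q}"]) (auto dest: admissible_bound[OF assms(1)])
  have adm: "admissible_J f g X T (J_max f g X T)"
    unfolding J_max_def using Max_in[OF fin ne] by simp
  define J where "J = J_max f g X T"
  have b: "4 * J + (X + T + 6 * g + 2) \<le> 2 * q"
    using admissible_bound[OF assms(1) adm] J_def by simp
  have br: "4 * real J + (real X + real T + 6 * real g + 2) \<le> 2 * real q"
    using b by linarith
  have part1: "int J \<le> \<lfloor>(2 * real q - (real X + real T + 6 * real g + 2)) / 4\<rfloor>"
    using br by (simp add: le_floor_iff field_simps)
  have D: "2 * real q + real X + real T + 4 * real g + 2 > 0" by simp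
  have E: "2 * real J + real X + real T + 5 * real g + 2 > 0" by simp
  have "(2 * real J - real g) / (2 * real J + real X + real T + 5 * real g + 2)
        \<le> (2 * real q - (real X + real T + 8 * real g + 2)) / (2 * real q + real X + real T + 4 * real g + 2)"
  proof -
    have "(2 * real J - real g) * (2 * real q + real X + real T + 4 * real g + 2)
          \<le> (2 * real q - (real X + real T + 8 * real g + 2)) * (2 * real J + real X + real T + 5 * real g + 2)"
    proof -
      have "0 \<le> (2 * real q - 4 * real J - (real X + real T + 6 * real g + 2)) * (real X + real T + 6 * real g + 2)"
        using br by (intro mult_nonneg_nonneg) auto
      then show ?thesis by (simp add: algebra_simps)
    qed
    then show ?thesis using D E by (simp add: divide_simps)
  qed
  then show "int (J_max f g X T) \<le> \<lfloor>(2 * real q - (real X + real T + 6 * real g + 2)) / 4\<rfloor> \<and>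
      R_max f g X T \<le> (2 * real q - (real X + real T + 8 * real g + 2)) /
                       (2 * real q + real X + real T + 4 * real g + 2)"
    using part1 unfolding R_max_def J_def by simp
qed

end
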